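(* (1) Let $a_{n,j}=2^j\binom nj$ for integers $n\geq 3$, $0\leq j\leq n$. Then for all integers $m\geq2$ and $0\leq l\leq m-1$, $$\frac{a_{3m-3,\,3m-l-3}}{a_{3m-3,\,l+m-1}}\leq\frac{a_{3m-2,\,3m-l-2}}{a_{3m-2,\,l+m-1}}\leq\frac{a_{3m-1,\,3m-l-1}}{a_{3m-1,\,l+m-1}}\leq 9.$$ (2) Let $a_{n,j}=3^j\binom nj$ for integers $n\geq2$, $0\leq j\leq n$. Then for all integers $m\geq2$ and $0\leq l\leq\lfloor (m-1)/2\rfloor$, $$\frac{a_{2m-2,\,2m-l-2}}{a_{2m-2,\,l+m-1}}\leq\frac{a_{2m-1,\,2m-l-1}}{a_{2m-1,\,l+m-1}}\leq 8.$$ *)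

theory Defs
  imports Complex_Main
begin

definition aseq :: "nat \<Rightarrow> nat \<Rightarrow> nat \<Rightarrow> real" where
  "aseq c n j = real c ^ j * real (n choose j)"

end

theory Submission
  imports Defs
begin

lemma binom_step: "Suc j * (n choose Suc j) = (n - j) * (n choose j)"
proof (cases n)
  case 0 then show ?thesis by simp
next
  case (Suc n')
  have "Suc j * (Suc n' choose Suc j) = Suc n' * (n' choose j)" by (rule Suc_times_binomial)
  moreover have "(Suc n' - j) * (Suc n' choose j) = Suc n' * ((Suc n' - 1) choose j)"
    by (rule binomial_absorb_comp)
  ultimately show ?thesis using Suc by simp
qed

lemma aseq_pos: "j \<le> n \<Longrightarrow> 0 < c \<Longrightarrow> 0 < aseq c n j"
  by (simp add: aseq_def)

lemma aseqL1:
  assumes "n = j + k + 1"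
  shows "aseq c n (j+1) * real (j+1) = aseq c n j * (real c * real (k+1))"
proof -
  have "Suc j * (n choose Suc j) = Suc k * (n choose j)" using binom_step[of j n] assms by simp
  hence eq: "real (n choose Suc j) * real (Suc j) = real (n choose j) * real (Suc k)"
    by (metis of_nat_mult mult.commute)
  have "aseq c n (j+1) * real (j+1) = real c * real c ^ j * (real (n choose Suc j) * real (Suc j))"
    by (simp add: aseq_def ac_simps)
  also have "\<dots> = real c * real c ^ j * (real (n choose j) * real (Suc k))" by (simp only: eq)
  also have "\<dots> = aseq c n j * (real c * real (k+1))" by (simp add: aseq_def ac_simps)
  finally show ?thesis .
qed

lemma aseqL2: "aseq c (n+1) (j+1) * real (j+1) = aseq c n j * (real c * real (n+1))"
proof -
  have "Suc j * (Suc n choose Suc j) = Suc n * (n choose j)" by (rule Suc_times_binomial)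
  hence eq: "real (Suc n choose Suc j) * real (Suc j) = real (n choose j) * real (Suc n)"
    by (metis of_nat_mult mult.commute)
  have "aseq c (n+1) (j+1) * real (j+1) = real c * real c ^ j * (real (Suc n choose Suc j) * real (Suc j))"
    by (simp add: aseq_def ac_simps)
  also have "\<dots> = real c * real c ^ j * (real (n choose j) * real (Suc n))" by (simp only: eq)
  also have "\<dots> = aseq c n j * (real c * real (n+1))" by (simp add: aseq_def ac_simps)
  finally show ?thesis .
qed

lemma aseqL3:
  assumes "n = j + k"
  shows "aseq c (n+1) j * real (k+1) = aseq c n j * real (n+1)"
proof -
  have "(Suc n - j) * (Suc n choose j) = Suc n * ((Suc n - 1) choose j)" by (rule binomial_absorb_comp)
  hence "Suc k * (Suc n choose j) = Suc n * (n choose j)" using assms by simp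
  hence eq: "real (Suc n choose j) * real (Suc k) = real (n choose j) * real (Suc n)"
    by (metis of_nat_mult mult.commute)
  show ?thesis using eq by (simp add: aseq_def ac_simps)
qed

lemma ratio_eq:
  fixes a a' b b' u v w z :: real
  assumes "a' * u = a * v" "b' * w = b * z" "u \<noteq> 0" "w \<noteq> 0" "b \<noteq> 0" "z \<noteq> 0"
  shows "a'/b' = (a/b) * ((v*w)/(u*z))"
proof -
  have 1: "a' = a*v/u" using assms by (simp add: field_simps)
  have 2: "b' = b*z/w" using assms by (simp add: field_simps)
  show ?thesis unfolding 1 2 using assms by (simp add: field_simps)
qed

lemma ratio1:
  fixes a a' u v :: real
  assumes "a' * u = a * v" "a \<noteq> 0" "u \<noteq> 0"
  shows "a'/a = v/u"
  using assms by (simp add: field_simps)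

lemma iter_bound:
  fixes r :: "nat \<Rightarrow> real"
  assumes "\<And>i. i < K \<Longrightarrow> r (Suc i) \<le> r i * q" "0 \<le> q"
  shows "k \<le> K \<Longrightarrow> r k \<le> r 0 * q ^ k"
proof (induction k)
  case 0 then show ?case by simp
next
  case (Suc k)
  have "r (Suc k) \<le> r k * q" using assms(1) Suc.prems by simp
  also have "\<dots> \<le> r 0 * q ^ k * q" using Suc assms(2) by (simp add: mult_right_mono)
  finally show ?case by (simp add: ac_simps)
qed

lemma exp_bound: "exp (3/2::real) \<le> (8/7)^12"
proof -
  have a: "1 + (-1/8) \<le> exp (-1/8::real)" by (rule exp_ge_add_one_self)
  have "exp (1/8::real) = inverse (exp (-1/8))" by (simp add: exp_minus)
  also have "\<dots> \<le> inverse (7/8)" using a by (intro le_imp_inverse_le) auto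
  finally have b: "exp (1/8::real) \<le> 8/7" by simp
  have "exp (3/2::real) = exp (of_nat 12 * (1/8))" by simp
  also have "\<dots> = exp (1/8) ^ 12" by (rule exp_of_nat_mult)
  also have "\<dots> \<le> (8/7)^12" by (rule power_mono[OF b]) simp
  finally show ?thesis .
qed

lemma pow_exp: "0 \<le> (y::real) \<Longrightarrow> (1+y)^k \<le> exp (real k * y)"
proof -
  assume "0 \<le> y"
  have "(1+y)^k \<le> exp y ^ k" by (rule power_mono) (use \<open>0 \<le> y\<close> in auto)
  also have "\<dots> = exp (real k * y)" by (simp add: exp_of_nat_mult)
  finally show ?thesis .
qed


lemma one_le_frac:
  assumes "u \<le> c*v" "0 < u" "0 < z"
  shows "1 \<le> real c * real z * real v / (real u * real z)"
proof -
  have "real u \<le> real c * real v" using assms(1) by (metis of_nat_le_iff of_nat_mult)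
  hence "real u * real z \<le> real c * real z * real v" using assms(3)
    by (simp add: mult_right_mono mult.commute mult.left_commute)
  moreover have "real u * real z > 0" using assms by simp
  ultimately show ?thesis using le_divide_eq_1_pos by blast
qed

lemma mono1:
  fixes l d :: nat
  shows "aseq 2 (3*l+3*d) (2*l+3*d) / aseq 2 (3*l+3*d) (2*l+d)
     \<le> aseq 2 (3*l+3*d+1) (2*l+3*d+1) / aseq 2 (3*l+3*d+1) (2*l+d)"
proof -
  have e1: "aseq 2 (3*l+3*d+1) (2*l+3*d+1) * real (2*l+3*d+1) = aseq 2 (3*l+3*d) (2*l+3*d) * (real 2 * real (3*l+3*d+1))"
    by (rule aseqL2)
  have e2: "aseq 2 (3*l+3*d+1) (2*l+d) * real (l+2*d+1) = aseq 2 (3*l+3*d) (2*l+d) * real (3*l+3*d+1)"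
    by (rule aseqL3) simp
  have pb: "aseq 2 (3*l+3*d) (2*l+d) > 0" by (rule aseq_pos) auto
  have pa: "aseq 2 (3*l+3*d) (2*l+3*d) \<ge> 0" by (simp add: aseq_def)
  have r: "aseq 2 (3*l+3*d+1) (2*l+3*d+1) / aseq 2 (3*l+3*d+1) (2*l+d)
     = (aseq 2 (3*l+3*d) (2*l+3*d) / aseq 2 (3*l+3*d) (2*l+d)) *
       ((real 2 * real (3*l+3*d+1) * real (l+2*d+1)) / (real (2*l+3*d+1) * real (3*l+3*d+1)))" (is "_ = ?R0 * _")
    by (rule ratio_eq[OF e1 e2]) (use pb in auto)
  have f: "1 \<le> (real 2 * real (3*l+3*d+1) * real (l+2*d+1)) / (real (2*l+3*d+1) * real (3*l+3*d+1))"
    by (rule one_le_frac) simp_all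
  have X: "0 \<le> ?R0" using pa pb by simp
  show ?thesis unfolding r using mult_left_mono[OF f X] by simp
qed

lemma mono2:
  fixes l d :: nat
  shows "aseq 2 (3*l+3*d+1) (2*l+3*d+1) / aseq 2 (3*l+3*d+1) (2*l+d)
     \<le> aseq 2 (3*l+3*d+1+1) (2*l+3*d+1+1) / aseq 2 (3*l+3*d+1+1) (2*l+d)"
proof -
  have e1: "aseq 2 (3*l+3*d+1+1) (2*l+3*d+1+1) * real (2*l+3*d+1+1) = aseq 2 (3*l+3*d+1) (2*l+3*d+1) * (real 2 * real (3*l+3*d+1+1))"
    by (rule aseqL2)
  have e2: "aseq 2 (3*l+3*d+1+1) (2*l+d) * real (l+2*d+1+1) = aseq 2 (3*l+3*d+1) (2*l+d) * real (3*l+3*d+1+1)"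
    by (rule aseqL3) simp
  have pb: "aseq 2 (3*l+3*d+1) (2*l+d) > 0" by (rule aseq_pos) auto
  have pa: "aseq 2 (3*l+3*d+1) (2*l+3*d+1) \<ge> 0" by (simp add: aseq_def)
  have r: "aseq 2 (3*l+3*d+1+1) (2*l+3*d+1+1) / aseq 2 (3*l+3*d+1+1) (2*l+d)
     = (aseq 2 (3*l+3*d+1) (2*l+3*d+1) / aseq 2 (3*l+3*d+1) (2*l+d)) *
       ((real 2 * real (3*l+3*d+1+1) * real (l+2*d+1+1)) / (real (2*l+3*d+1+1) * real (3*l+3*d+1+1)))" (is "_ = ?R0 * _")
    by (rule ratio_eq[OF e1 e2]) (use pb in auto)
  have f: "1 \<le> (real 2 * real (3*l+3*d+1+1) * real (l+2*d+1+1)) / (real (2*l+3*d+1+1) * real (3*l+3*d+1+1))"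
    by (rule one_le_frac) simp_all
  have X: "0 \<le> ?R0" using pa pb by simp
  show ?thesis unfolding r using mult_left_mono[OF f X] by simp
qed

lemma mono3:
  fixes l p :: nat
  shows "aseq 3 (4*l+2*p) (3*l+2*p) / aseq 3 (4*l+2*p) (3*l+p)
     \<le> aseq 3 (4*l+2*p+1) (3*l+2*p+1) / aseq 3 (4*l+2*p+1) (3*l+p)"
proof -
  have e1: "aseq 3 (4*l+2*p+1) (3*l+2*p+1) * real (3*l+2*p+1) = aseq 3 (4*l+2*p) (3*l+2*p) * (real 3 * real (4*l+2*p+1))"
    by (rule aseqL2)
  have e2: "aseq 3 (4*l+2*p+1) (3*l+p) * real (l+p+1) = aseq 3 (4*l+2*p) (3*l+p) * real (4*l+2*p+1)"
    by (rule aseqL3) simp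
  have pb: "aseq 3 (4*l+2*p) (3*l+p) > 0" by (rule aseq_pos) auto
  have pa: "aseq 3 (4*l+2*p) (3*l+2*p) \<ge> 0" by (simp add: aseq_def)
  have r: "aseq 3 (4*l+2*p+1) (3*l+2*p+1) / aseq 3 (4*l+2*p+1) (3*l+p)
     = (aseq 3 (4*l+2*p) (3*l+2*p) / aseq 3 (4*l+2*p) (3*l+p)) *
       ((real 3 * real (4*l+2*p+1) * real (l+p+1)) / (real (3*l+2*p+1) * real (4*l+2*p+1)))" (is "_ = ?R0 * _")
    by (rule ratio_eq[OF e1 e2]) (use pb in auto)
  have f: "1 \<le> (real 3 * real (4*l+2*p+1) * real (l+p+1)) / (real (3*l+2*p+1) * real (4*l+2*p+1))"
    by (rule one_le_frac) simp_all
  have X: "0 \<le> ?R0" using pa pb by simp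
  show ?thesis unfolding r using mult_left_mono[OF f X] by simp
qed


lemma frac_le:
  fixes u z v w s t :: real
  assumes "0 < u*z" "0 < s" "v*w*s \<le> t*(u*z)"
  shows "v*w/(u*z) \<le> t/s"
  using assms by (simp add: divide_le_eq field_simps)

lemma poly1: "(2*i+2*p+8)*(3*i+2*p+5)*(i+2*p+2) = 4*(p+1)*(2*i+p+4)*(2*i+2*p+5) + (36*i + 30*i*i + 18*i*p + 6*i*i*i+6*i*i*p::nat)"
  by (simp add: algebra_simps)

lemma poly2: "(2*l+5+p)*(3*l+5+2*p)*(3*l+3+p) = 9*(l+1)*(l+p+3)*(2*l+2+p) + (21 + 24*l + 25*p + 3*l*l + 19*l*p + 12*p*p + 4*l*p*p + 2*p*p*p::nat)"
  by (simp add: algebra_simps)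


lemma step1:
  fixes i p :: nat
  defines "n \<equiv> 3*i+3*p+5"
  shows "aseq 2 n (3*i+2*p+4+1) / aseq 2 n (i+2*p+1)
     \<le> (aseq 2 n (3*i+2*p+4) / aseq 2 n (i+2*p+1+1)) * (real (2*i+2*p+8) / real (2*i+2*p+5))"
proof -
  have e1: "aseq 2 n (3*i+2*p+4+1) * real (3*i+2*p+4+1) = aseq 2 n (3*i+2*p+4) * (real 2 * real (p+1))"
    by (rule aseqL1) (simp add: n_def)
  have e2: "aseq 2 n (i+2*p+1+1) * real (i+2*p+1+1) = aseq 2 n (i+2*p+1) * (real 2 * real (2*i+p+3+1))"
    by (rule aseqL1) (simp add: n_def)
  have pb: "aseq 2 n (i+2*p+1+1) > 0" by (rule aseq_pos) (auto simp: n_def)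
  have pa: "aseq 2 n (3*i+2*p+4) \<ge> 0" by (simp add: aseq_def)
  have r: "aseq 2 n (3*i+2*p+4+1) / aseq 2 n (i+2*p+1)
     = (aseq 2 n (3*i+2*p+4) / aseq 2 n (i+2*p+1+1)) *
       ((real 2 * real (p+1) * (real 2 * real (2*i+p+3+1))) / (real (3*i+2*p+4+1) * real (i+2*p+1+1)))"
    by (rule ratio_eq[OF e1 e2[symmetric]]) (use pb in auto)
  have P: "real ((2*i+2*p+8)*(3*i+2*p+5)*(i+2*p+2)) \<ge> real (4*(p+1)*(2*i+p+4)*(2*i+2*p+5))"
    unfolding poly1 by simp
  have f: "(real 2 * real (p+1) * (real 2 * real (2*i+p+3+1))) / (real (3*i+2*p+4+1) * real (i+2*p+1+1))
      \<le> real (2*i+2*p+8) / real (2*i+2*p+5)"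
    apply (rule frac_le)
      apply simp
     apply simp
    using P by (simp add: algebra_simps)
  have X: "0 \<le> aseq 2 n (3*i+2*p+4) / aseq 2 n (i+2*p+1+1)" using pa pb by simp
  show ?thesis unfolding r by (rule mult_left_mono[OF f X])
qed

lemma step2:
  fixes l p :: nat
  defines "n \<equiv> 4*l+5+2*p"
  shows "aseq 3 n (3*l+4+2*p+1) / aseq 3 n (3*l+2+p)
     \<le> (aseq 3 n (3*l+4+2*p) / aseq 3 n (3*l+2+p+1)) * (real (2*l+5+p) / real (2*l+2+p))"
proof -
  have e1: "aseq 3 n (3*l+4+2*p+1) * real (3*l+4+2*p+1) = aseq 3 n (3*l+4+2*p) * (real 3 * real (l+1))"
    by (rule aseqL1) (simp add: n_def)
  have e2: "aseq 3 n (3*l+2+p+1) * real (3*l+2+p+1) = aseq 3 n (3*l+2+p) * (real 3 * real (l+p+2+1))"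
    by (rule aseqL1) (simp add: n_def)
  have pb: "aseq 3 n (3*l+2+p+1) > 0" by (rule aseq_pos) (auto simp: n_def)
  have pa: "aseq 3 n (3*l+4+2*p) \<ge> 0" by (simp add: aseq_def)
  have r: "aseq 3 n (3*l+4+2*p+1) / aseq 3 n (3*l+2+p)
     = (aseq 3 n (3*l+4+2*p) / aseq 3 n (3*l+2+p+1)) *
       ((real 3 * real (l+1) * (real 3 * real (l+p+2+1))) / (real (3*l+4+2*p+1) * real (3*l+2+p+1)))"
    by (rule ratio_eq[OF e1 e2[symmetric]]) (use pb in auto)
  have P: "real ((2*l+5+p)*(3*l+5+2*p)*(3*l+3+p)) \<ge> real (9*(l+1)*(l+p+3)*(2*l+2+p))"
    unfolding poly2 by simp
  have f: "(real 3 * real (l+1) * (real 3 * real (l+p+2+1))) / (real (3*l+4+2*p+1) * real (3*l+2+p+1))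
      \<le> real (2*l+5+p) / real (2*l+2+p)"
    apply (rule frac_le)
      apply simp
     apply simp
    using P by (simp add: algebra_simps)
  have X: "0 \<le> aseq 3 n (3*l+4+2*p) / aseq 3 n (3*l+2+p+1)" using pa pb by simp
  show ?thesis unfolding r by (rule mult_left_mono[OF f X])
qed


lemma r0_1:
  assumes m: "2 \<le> m"
  shows "aseq 2 (3*m-1) (2*m) / aseq 2 (3*m-1) (2*m-2) = real (2*m+2) / real (2*m-1)"
proof -
  define p where "p = m - 2"
  have mp: "m = p + 2" using m unfolding p_def by simp
  have idx: "3*m-1 = 3*p+5" "2*m = 2*p+2+1+1" "2*m-2 = 2*p+2" "2*m+2 = 2*p+6" "2*m-1 = 2*p+3"
    using mp by simp_all
  have e1: "aseq 2 (3*p+5) (2*p+2+1) * real (2*p+2+1) = aseq 2 (3*p+5) (2*p+2) * (real 2 * real (p+2+1))"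
    by (rule aseqL1) simp
  have e2: "aseq 2 (3*p+5) (2*p+2+1+1) * real (2*p+2+1+1) = aseq 2 (3*p+5) (2*p+2+1) * (real 2 * real (p+1+1))"
    by (rule aseqL1) simp
  have pb: "aseq 2 (3*p+5) (2*p+2) > 0" by (rule aseq_pos) auto
  have a4: "aseq 2 (3*p+5) (2*p+2+1+1) = aseq 2 (3*p+5) (2*p+2+1)"
  proof -
    have c: "real (2*p+2+1+1) = real 2 * real (p+1+1)" by simp
    from e2 have "aseq 2 (3*p+5) (2*p+2+1+1) * (real 2 * real (p+1+1)) = aseq 2 (3*p+5) (2*p+2+1) * (real 2 * real (p+1+1))"
      unfolding c .
    thus ?thesis by simp
  qed
  have a3: "aseq 2 (3*p+5) (2*p+2+1) / aseq 2 (3*p+5) (2*p+2) = real (2*p+6) / real (2*p+3)"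
  proof -
    have "aseq 2 (3*p+5) (2*p+2+1) / aseq 2 (3*p+5) (2*p+2) = (real 2 * real (p+2+1)) / real (2*p+2+1)"
      by (rule ratio1[OF e1]) (use pb in auto)
    also have "\<dots> = real (2*p+6) / real (2*p+3)" by (simp add: algebra_simps)
    finally show ?thesis .
  qed
  have "aseq 2 (3*p+5) (2*p+2+1+1) / aseq 2 (3*p+5) (2*p+2) = real (2*p+6) / real (2*p+3)"
    using a3 a4 by simp
  thus ?thesis using mp by (simp add: algebra_simps)
qed

lemma UB1:
  assumes m: "2 \<le> m" and d: "d \<le> m - 1"
  shows "aseq 2 (3*m-1) (2*m+d) / aseq 2 (3*m-1) (2*m-2-d) \<le> 9"
proof -
  define r where "r = (\<lambda>d. aseq 2 (3*m-1) (2*m+d) / aseq 2 (3*m-1) (2*m-2-d))"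
  define q where "q = real (2*m+4) / real (2*m+1)"
  have step: "r (Suc i) \<le> r i * q" if "i < m - 1" for i
  proof -
    define p where "p = m - i - 2"
    have mp: "m = i+p+2" using that m unfolding p_def by simp
    have idx: "3*m-1 = 3*i+3*p+5" "2*m + Suc i = 3*i+2*p+4+1" "2*m+i = 3*i+2*p+4"
      "2*m-2-Suc i = i+2*p+1" "2*m-2-i = i+2*p+1+1" using mp by simp_all
    have q': "q = real (2*i+2*p+8)/real(2*i+2*p+5)" unfolding q_def mp by (simp add: algebra_simps)
    show ?thesis unfolding r_def idx q' using step1[of i p] by simp
  qed
  have q1: "1 \<le> q" unfolding q_def by simp
  have rd: "r d \<le> r 0 * q ^ d"
    by (rule iter_bound[where K="m-1"]) (use step q1 d in auto)
  have r0: "r 0 = real (2*m+2) / real (2*m-1)" unfolding r_def using r0_1[OF m] by simp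
  have r0pos: "0 \<le> r 0" unfolding r0 by simp
  have "q ^ d \<le> q ^ (m-1)" by (rule power_increasing[OF d q1])
  hence rm: "r d \<le> r 0 * q ^ (m-1)" using rd r0pos by (meson mult_left_mono order_trans)
  show ?thesis
  proof (cases "m = 2")
    case True
    have "r 0 * q ^ (m-1) = 16/5" unfolding r0 q_def True by simp
    with rm have "r d \<le> 9" by simp
    thus ?thesis unfolding r_def by simp
  next
    case False
    hence m3: "3 \<le> m" using m by simp
    have r0b: "r 0 \<le> 8/5" unfolding r0 using m3 by (simp add: divide_le_eq)
    have qe: "q = 1 + 3 / (2 * real m + 1)" unfolding q_def by (simp add: field_simps)
    have "q ^ (m-1) \<le> exp (real (m-1) * (3 / (2 * real m + 1)))"
      unfolding qe by (rule pow_exp) simp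
    also have "\<dots> \<le> exp (3/2)"
      using m3 by (simp add: of_nat_diff field_simps)
    also have "\<dots> \<le> (8/7)^12" by (rule exp_bound)
    finally have qb: "q ^ (m-1) \<le> (8/7)^12" .
    have "r 0 * q ^ (m-1) \<le> 8/5 * (8/7)^12"
      by (rule mult_mono[OF r0b qb]) (use q1 in simp_all)
    also have "\<dots> \<le> 9" by (simp add: power_divide)
    finally have "r d \<le> 9" using rm by linarith
    thus ?thesis unfolding r_def by simp
  qed
qed


lemma top_odd:
  "aseq 3 (4*L+1) (3*L+1) / aseq 3 (4*L+1) (3*L) = real (3*L+3) / real (3*L+1)"
proof -
  have e1: "aseq 3 (4*L+1) (3*L+1) * real (3*L+1) = aseq 3 (4*L+1) (3*L) * (real 3 * real (L+1))"
    by (rule aseqL1) simp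
  have pb: "aseq 3 (4*L+1) (3*L) > 0" by (rule aseq_pos) auto
  have "aseq 3 (4*L+1) (3*L+1) / aseq 3 (4*L+1) (3*L) = (real 3 * real (L+1)) / real (3*L+1)"
    by (rule ratio1[OF e1]) (use pb in auto)
  also have "\<dots> = real (3*L+3) / real (3*L+1)" by (simp add: algebra_simps)
  finally show ?thesis .
qed

lemma top_even:
  "aseq 3 (4*L+3) (3*L+1+1+1) / aseq 3 (4*L+3) (3*L+1) = real (3*L+6) / real (3*L+2)"
proof -
  have e1: "aseq 3 (4*L+3) (3*L+1+1) * real (3*L+1+1) = aseq 3 (4*L+3) (3*L+1) * (real 3 * real (L+1+1))"
    by (rule aseqL1) simp
  have e2: "aseq 3 (4*L+3) (3*L+1+1+1) * real (3*L+1+1+1) = aseq 3 (4*L+3) (3*L+1+1) * (real 3 * real (L+1))"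
    by (rule aseqL1) simp
  have pb: "aseq 3 (4*L+3) (3*L+1) > 0" by (rule aseq_pos) auto
  have a4: "aseq 3 (4*L+3) (3*L+1+1+1) = aseq 3 (4*L+3) (3*L+1+1)"
  proof -
    have c: "real (3*L+1+1+1) = real 3 * real (L+1)" by simp
    from e2 have "aseq 3 (4*L+3) (3*L+1+1+1) * (real 3 * real (L+1)) = aseq 3 (4*L+3) (3*L+1+1) * (real 3 * real (L+1))"
      unfolding c .
    thus ?thesis by simp
  qed
  have "aseq 3 (4*L+3) (3*L+1+1) / aseq 3 (4*L+3) (3*L+1) = (real 3 * real (L+1+1)) / real (3*L+1+1)"
    by (rule ratio1[OF e1]) (use pb in auto)
  also have "\<dots> = real (3*L+6) / real (3*L+2)" by (simp add: algebra_simps)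
  finally show ?thesis unfolding a4 .
qed

lemma UB2:
  assumes m: "2 \<le> m" and l: "l \<le> (m-1) div 2"
  shows "aseq 3 (2*m-1) (2*m-l-1) / aseq 3 (2*m-1) (l+m-1) \<le> 8"
proof -
  define L where "L = (m-1) div 2"
  define R where "R = (\<lambda>l. aseq 3 (2*m-1) (2*m-l-1) / aseq 3 (2*m-1) (l+m-1))"
  define q where "q = real (m+2) / real (m-1)"
  have stepR: "R l' \<le> R (Suc l') * q" if "2*l'+3 \<le> m" for l'
  proof -
    define p where "p = m - 2*l' - 3"
    have mp: "m = 2*l'+3+p" using that unfolding p_def by simp
    have idx: "2*m-1 = 4*l'+5+2*p" "2*m-l'-1 = 3*l'+4+2*p+1" "l'+m-1 = 3*l'+2+p"
      "2*m - Suc l' - 1 = 3*l'+4+2*p" "Suc l' + m - 1 = 3*l'+2+p+1" using mp by simp_all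
    have q': "q = real (2*l'+5+p)/real(2*l'+2+p)" unfolding q_def mp by (simp add: algebra_simps)
    show ?thesis unfolding R_def idx q' using step2[of l' p] by simp
  qed
  have L2: "2*L \<le> m - 1" unfolding L_def by simp
  define r where "r = (\<lambda>k. R (L - k))"
  have step: "r (Suc k) \<le> r k * q" if "k < L" for k
  proof -
    have "R (L - Suc k) \<le> R (Suc (L - Suc k)) * q" by (rule stepR) (use that L2 in simp)
    moreover have "Suc (L - Suc k) = L - k" using that by simp
    ultimately show ?thesis unfolding r_def by simp
  qed
  have q1: "1 \<le> q" unfolding q_def using m by (simp add: of_nat_diff)
  have lL: "l \<le> L" using l unfolding L_def .
  have "r (L - l) \<le> r 0 * q ^ (L - l)"
    by (rule iter_bound[where K=L]) (use step q1 in auto)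
  hence rl: "R l \<le> R L * q ^ (L - l)" unfolding r_def using lL by simp
  have RL0: "0 \<le> R L" unfolding R_def by (simp add: aseq_def)
  have "q ^ (L - l) \<le> q ^ L" by (rule power_increasing[OF _ q1]) simp
  hence rl2: "R l \<le> R L * q ^ L" using rl RL0 by (meson mult_left_mono order_trans)
  have qe: "q = 1 + 3 / real (m - 1)" unfolding q_def using m by (simp add: field_simps of_nat_diff)
  have big: "R L * q ^ L \<le> 8" if "R L \<le> 3/2" "2 \<le> L"
  proof -
    have "q ^ L \<le> exp (real L * (3 / real (m-1)))" unfolding qe by (rule pow_exp) simp
    also have "\<dots> \<le> exp (3/2)"
    proof -
      have "real (2*L) \<le> real (m-1)" using L2 by linarith
      moreover have "real (m-1) > 0" using m by simp
      ultimately have "real L * (3 / real (m-1)) \<le> 3/2" by (simp add: field_simps)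
      thus ?thesis by simp
    qed
    also have "\<dots> \<le> (8/7)^12" by (rule exp_bound)
    finally have qb: "q ^ L \<le> (8/7)^12" .
    have "R L * q ^ L \<le> 3/2 * (8/7)^12"
      by (rule mult_mono[OF that(1) qb]) (use q1 in simp_all)
    also have "\<dots> \<le> 8" by (simp add: power_divide)
    finally show ?thesis .
  qed
  have par: "m = 2*L+1 \<or> m = 2*L+2" unfolding L_def using m by arith
  have "R L * q ^ L \<le> 8"
  proof (cases "m = 2*L+1")
    case True
    have RL: "R L = real (3*L+3) / real (3*L+1)"
      unfolding R_def True using top_odd[of L] by (simp add: algebra_simps)
    show ?thesis
    proof (cases "L \<le> 1")
      case True
      with \<open>m = 2*L+1\<close> m have "L = 1" by simp
      thus ?thesis unfolding RL q_def using \<open>m = 2*L+1\<close> by simp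
    next
      case False
      have "R L \<le> 3/2" unfolding RL using False by (simp add: divide_le_eq)
      thus ?thesis using big False by simp
    qed
  next
    case False
    hence mL: "m = 2*L+2" using par by simp
    have RL: "R L = real (3*L+6) / real (3*L+2)"
    proof -
      have idx: "2*m-1 = 4*L+3" "2*m-L-1 = 3*L+1+1+1" "L+m-1 = 3*L+1" using mL by simp_all
      show ?thesis unfolding R_def idx top_even by simp
    qed
    show ?thesis
    proof (cases "L \<le> 1")
      case True
      hence "L = 0 \<or> L = 1" by auto
      thus ?thesis unfolding RL q_def using mL by auto
    next
      case False
      have "R L \<le> 3/2" unfolding RL using False by (simp add: divide_le_eq)
      thus ?thesis using big False by simp
    qed
  qed
  with rl2 have "R l \<le> 8" by linarith
  thus ?thesis unfolding R_def by simp
qed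


theorem lemma3p5:
  shows "(\<forall>m l :: nat. m \<ge> 2 \<and> l \<le> m - 1 \<longrightarrow>
            aseq 2 (3*m-3) (3*m-l-3) / aseq 2 (3*m-3) (l+m-1)
              \<le> aseq 2 (3*m-2) (3*m-l-2) / aseq 2 (3*m-2) (l+m-1)
          \<and> aseq 2 (3*m-2) (3*m-l-2) / aseq 2 (3*m-2) (l+m-1)
              \<le> aseq 2 (3*m-1) (3*m-l-1) / aseq 2 (3*m-1) (l+m-1)
          \<and> aseq 2 (3*m-1) (3*m-l-1) / aseq 2 (3*m-1) (l+m-1) \<le> 9)
       \<and> (\<forall>m l :: nat. m \<ge> 2 \<and> l \<le> (m - 1) div 2 \<longrightarrow>
            aseq 3 (2*m-2) (2*m-l-2) / aseq 3 (2*m-2) (l+m-1)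
              \<le> aseq 3 (2*m-1) (2*m-l-1) / aseq 3 (2*m-1) (l+m-1)
          \<and> aseq 3 (2*m-1) (2*m-l-1) / aseq 3 (2*m-1) (l+m-1) \<le> 8)"
proof (intro conjI allI impI; elim conjE)
  fix m l :: nat
  assume m: "2 \<le> m" and l: "l \<le> m - 1"
  define d where "d = m - 1 - l"
  have md: "m = l + d + 1" using m l unfolding d_def by simp
  have i1: "3*m-3 = 3*l+3*d" "3*m-l-3 = 2*l+3*d" "l+m-1 = 2*l+d" "3*m-2 = 3*l+3*d+1"
    "3*m-l-2 = 2*l+3*d+1" using md by simp_all
  show "aseq 2 (3*m-3) (3*m-l-3) / aseq 2 (3*m-3) (l+m-1)
              \<le> aseq 2 (3*m-2) (3*m-l-2) / aseq 2 (3*m-2) (l+m-1)"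
    unfolding i1 by (rule mono1)
  have i2: "3*m-2 = 3*l+3*d+1" "3*m-l-2 = 2*l+3*d+1" "l+m-1 = 2*l+d" "3*m-1 = 3*l+3*d+1+1"
    "3*m-l-1 = 2*l+3*d+1+1" using md by simp_all
  show "aseq 2 (3*m-2) (3*m-l-2) / aseq 2 (3*m-2) (l+m-1)
              \<le> aseq 2 (3*m-1) (3*m-l-1) / aseq 2 (3*m-1) (l+m-1)"
    unfolding i2 by (rule mono2)
  have i3: "3*m-l-1 = 2*m+d" "l+m-1 = 2*m-2-d" using md by simp_all
  show "aseq 2 (3*m-1) (3*m-l-1) / aseq 2 (3*m-1) (l+m-1) \<le> 9"
    unfolding i3 by (rule UB1[OF m]) (simp add: d_def)
next
  fix m l :: nat
  assume m: "2 \<le> m" and l: "l \<le> (m - 1) div 2"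
  define p where "p = m - 1 - 2*l"
  have mp: "m = 2*l + p + 1" using m l unfolding p_def by simp
  have i1: "2*m-2 = 4*l+2*p" "2*m-l-2 = 3*l+2*p" "l+m-1 = 3*l+p" "2*m-1 = 4*l+2*p+1"
    "2*m-l-1 = 3*l+2*p+1" using mp by simp_all
  show "aseq 3 (2*m-2) (2*m-l-2) / aseq 3 (2*m-2) (l+m-1)
              \<le> aseq 3 (2*m-1) (2*m-l-1) / aseq 3 (2*m-1) (l+m-1)"
    unfolding i1 by (rule mono3)
  show "aseq 3 (2*m-1) (2*m-l-1) / aseq 3 (2*m-1) (l+m-1) \<le> 8"
    by (rule UB2[OF m l])
qed

end
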